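(* Let $G$ be a graph and let $C=v_0v_1\ldots v_{n-1}$ be an induced cycle of $G$ of length $n\ge 5$ with good neighbours. For $i=0,\dots,n-1$ let $B_i$ be a biclique of $G$ containing $\{v_{i-1},v_i,v_{i+1}\}$ (indices mod $n$), and let $b_i$ be the vertex of $KB_e(G)$ corresponding to $B_i$. Then $V(B_i)\subseteq N[v_i]$ for all $i$, $C'=b_0b_1\ldots b_{n-1}$ is an induced cycle (of length $n$) of $KB_e(G)$, and $C'$ has good neighbours in $KB_e(G)$.
   Context: All graphs are finite, simple and undirected. A biclique of a graph $G$ is a maximal (with respect to inclusion) induced subgraph of $G$ that is a complete bipartite graph $K_{p,q}$ with $p,q\ge 1$. The edge-biclique graph $KB_e(G)$ has one vertex for each biclique of $G$, two distinct vertices being adjacent iff the corresponding bicliques share at least one edge. An induced cycle $C=v_0v_1\ldots v_{n-1}$ ($n\ge5$) of a graph $H$ has good neighbours (in $H$) if for every vertex $v\in V(H)\setminus V(C)$ and every $i\in\{0,\dots,n-1\}$ (indices mod $n$), $\{v_{i-1},v_{i+1}\}\subseteq N(v)$ implies $v_i\in N(v)$. $N[v]$ is the closed neighbourhood of $v$. *)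

theory Defs
  imports Main
begin

definition graph :: "'a set \<Rightarrow> ('a \<Rightarrow> 'a \<Rightarrow> bool) \<Rightarrow> bool" where
  "graph V E \<longleftrightarrow> finite V \<and> (\<forall>x y. E x y \<longrightarrow> x \<in> V \<and> y \<in> V)
     \<and> (\<forall>x y. E x y \<longrightarrow> E y x) \<and> (\<forall>x. \<not> E x x)"

definition induces_complete_bipartite :: "'a set \<Rightarrow> ('a \<Rightarrow> 'a \<Rightarrow> bool) \<Rightarrow> 'a set \<Rightarrow> bool" where
  "induces_complete_bipartite V E S \<longleftrightarrow> S \<subseteq> V \<and>
     (\<exists>X Y. S = X \<union> Y \<and> X \<inter> Y = {} \<and> X \<noteq> {} \<and> Y \<noteq> {}
        \<and> (\<forall>x\<in>X. \<forall>y\<in>Y. E x y)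
        \<and> (\<forall>x\<in>X. \<forall>x'\<in>X. \<not> E x x')
        \<and> (\<forall>y\<in>Y. \<forall>y'\<in>Y. \<not> E y y'))"

definition biclique :: "'a set \<Rightarrow> ('a \<Rightarrow> 'a \<Rightarrow> bool) \<Rightarrow> 'a set \<Rightarrow> bool" where
  "biclique V E S \<longleftrightarrow> induces_complete_bipartite V E S \<and>
     (\<forall>T. induces_complete_bipartite V E T \<and> S \<subseteq> T \<longrightarrow> T = S)"

definition KBe_vertices :: "'a set \<Rightarrow> ('a \<Rightarrow> 'a \<Rightarrow> bool) \<Rightarrow> 'a set set" where
  "KBe_vertices V E = {S. biclique V E S}"

definition KBe_adj :: "'a set \<Rightarrow> ('a \<Rightarrow> 'a \<Rightarrow> bool) \<Rightarrow> 'a set \<Rightarrow> 'a set \<Rightarrow> bool" where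
  "KBe_adj V E S T \<longleftrightarrow> biclique V E S \<and> biclique V E T \<and> S \<noteq> T \<and>
     (\<exists>x y. E x y \<and> x \<in> S \<and> y \<in> S \<and> x \<in> T \<and> y \<in> T)"

definition closed_nbhd :: "('a \<Rightarrow> 'a \<Rightarrow> bool) \<Rightarrow> 'a \<Rightarrow> 'a set" where
  "closed_nbhd E v = insert v {u. E v u}"

definition induced_cycle :: "'a set \<Rightarrow> ('a \<Rightarrow> 'a \<Rightarrow> bool) \<Rightarrow> nat \<Rightarrow> (nat \<Rightarrow> 'a) \<Rightarrow> bool" where
  "induced_cycle V E n c \<longleftrightarrow> n \<ge> 3 \<and> (\<forall>i<n. c i \<in> V) \<and> inj_on c {..<n} \<and>
     (\<forall>i<n. \<forall>j<n. E (c i) (c j) \<longleftrightarrow> (j = (i + 1) mod n \<or> i = (j + 1) mod n))"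

definition good_neighbours :: "'a set \<Rightarrow> ('a \<Rightarrow> 'a \<Rightarrow> bool) \<Rightarrow> nat \<Rightarrow> (nat \<Rightarrow> 'a) \<Rightarrow> bool" where
  "good_neighbours V E n c \<longleftrightarrow>
     (\<forall>w \<in> V - c ` {..<n}. \<forall>i<n.
        E w (c ((i + n - 1) mod n)) \<and> E w (c ((i + 1) mod n)) \<longrightarrow> E w (c i))"

end

theory Submission
  imports Defs
begin

lemma sm: "i < (n::nat) \<Longrightarrow> Suc i mod n = (if Suc i=n then 0 else Suc i)"
  by auto

lemma pm: "i < (n::nat) \<Longrightarrow> (i+n-Suc 0) mod n = (if i=0 then n-1 else i-1)"
proof (cases i)
  case (Suc k) assume "i<n" then show ?thesis using Suc
    by (simp add: add.commute[of _ n])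
qed simp

lemma near: "\<lbrakk>i<(n::nat); j<n; 5\<le>n;
  (i+n-1) mod n = j \<or> (i+n-1) mod n = (j+1) mod n \<or> j = ((i+n-1) mod n + 1) mod n;
  (i+1) mod n = j \<or> (i+1) mod n = (j+1) mod n \<or> j = ((i+1) mod n + 1) mod n\<rbrakk> \<Longrightarrow> j = i"
  apply (simp add: sm pm)
  apply (auto split: if_splits)
  done

lemma A2: "\<lbrakk>i<(n::nat); 5\<le>n\<rbrakk> \<Longrightarrow> ((i+n-1) mod n + 1) mod n = i"
  by (auto simp add: sm pm split: if_splits)

lemma A3: "\<lbrakk>i<(n::nat); 5\<le>n\<rbrakk> \<Longrightarrow> ((i+1) mod n + n - 1) mod n = i"
  by (auto simp add: sm pm split: if_splits)

lemma A4: "\<lbrakk>i<(n::nat); 5\<le>n\<rbrakk> \<Longrightarrow> (i+1) mod n \<noteq> ((i+n-1) mod n+1) mod n \<and> (i+n-1) mod n \<noteq> ((i+1) mod n + 1) mod n"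
  by (auto simp add: sm pm split: if_splits)

lemma A5: "\<lbrakk>i<(n::nat); 5\<le>n\<rbrakk> \<Longrightarrow> i \<noteq> (i+1) mod n \<and> i \<noteq> (i+n-1) mod n"
  by (auto simp add: sm pm split: if_splits)

lemma bipl:
  assumes XY: "T = X \<union> Y" "X \<inter> Y = {}"
     "\<forall>x\<in>X. \<forall>y\<in>Y. E x y" "\<forall>x\<in>X. \<forall>x'\<in>X. \<not> E x x'" "\<forall>y\<in>Y. \<forall>y'\<in>Y. \<not> E y y'"
   and sym: "\<And>x y. E x y \<Longrightarrow> E y x"
   and abc: "a \<in> T" "b \<in> T" "c \<in> T" "E a b" "\<not> E a c"
  shows "E b c"
proof (cases "a \<in> X")
  case True
  then have "b \<in> Y" using abc XY by blast
  moreover have "c \<in> X" using True abc XY by blast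
  ultimately have "E c b" using XY by blast
  then show ?thesis by (rule sym)
next
  case False
  then have aY: "a \<in> Y" using abc XY by blast
  then have "b \<in> X" using abc XY by blast
  moreover have "c \<in> Y"
  proof (rule ccontr)
    assume "c \<notin> Y"
    then have "c \<in> X" using abc XY by blast
    then have "E c a" using aY XY by blast
    then show False using abc sym by blast
  qed
  ultimately show ?thesis using XY by blast
qed

lemma side:
  assumes g: "graph V E" and n5: "n\<ge>5" and c: "induced_cycle V E n v"
    and gn: "good_neighbours V E n v" and i: "i<n" and SV: "S \<subseteq> V"
    and sub: "{v ((i+n-1) mod n), v i, v ((i+1) mod n)} \<subseteq> S"
    and X: "S = X \<union> Y" "\<forall>x\<in>X. \<forall>y\<in>Y. E x y" "\<forall>x\<in>X. \<forall>x'\<in>X. \<not> E x x'"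
    "v i \<in> X"
  shows "X = {v i}"
proof -
  have n0: "0 < n" using n5 by simp
  have pl: "(i+n-1) mod n < n" and sl: "(i+1) mod n < n" using n0 by auto
  have cyc: "\<And>a b. a<n \<Longrightarrow> b<n \<Longrightarrow> E (v a) (v b) \<longleftrightarrow> (b = (a + 1) mod n \<or> a = (b + 1) mod n)"
    using c unfolding induced_cycle_def by blast
  have Ea: "E (v i) (v ((i+n-1) mod n))" using cyc[OF i pl] A2[OF i n5] by simp
  have Eb: "E (v i) (v ((i+1) mod n))" using cyc[OF i sl] by simp
  have aY: "v ((i+n-1) mod n) \<in> Y" using Ea sub X by blast
  have bY: "v ((i+1) mod n) \<in> Y" using Eb sub X by blast
  show ?thesis
  proof
    show "{v i} \<subseteq> X" using X by simp
    show "X \<subseteq> {v i}"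
    proof
      fix w assume w: "w \<in> X"
      have wa: "E w (v ((i+n-1) mod n))" and wb: "E w (v ((i+1) mod n))" using w aY bY X by auto
      have wV: "w \<in> V" using w X SV by blast
      show "w \<in> {v i}"
      proof (cases "w \<in> v ` {..<n}")
        case False
        then have "E w (v i)" using gn wV wa wb i unfolding good_neighbours_def by blast
        moreover have "\<not> E w (v i)" using X w by blast
        ultimately show ?thesis by blast
      next
        case True
        then obtain j where j: "j<n" "w = v j" by auto
        have "(i+n-1) mod n = j \<or> (i+n-1) mod n = (j+1) mod n \<or> j = ((i+n-1) mod n + 1) mod n"
          using cyc[OF j(1) pl] wa j by auto
        moreover have "(i+1) mod n = j \<or> (i+1) mod n = (j+1) mod n \<or> j = ((i+1) mod n + 1) mod n"
          using cyc[OF j(1) sl] wb j by auto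
        ultimately have "j = i" using near[OF i j(1) n5] by blast
        then show ?thesis using j by simp
      qed
    qed
  qed
qed

lemma star:
  assumes g: "graph V E" and n5: "n\<ge>5" and c: "induced_cycle V E n v"
    and gn: "good_neighbours V E n v" and i: "i<n" and S: "induces_complete_bipartite V E S"
    and sub: "{v ((i+n-1) mod n), v i, v ((i+1) mod n)} \<subseteq> S"
  shows "v i \<in> S \<and> (\<forall>y\<in>S. y \<noteq> v i \<longrightarrow> E (v i) y) \<and> (\<forall>y\<in>S. \<forall>y'\<in>S. y \<noteq> v i \<longrightarrow> y' \<noteq> v i \<longrightarrow> \<not> E y y')"
proof -
  have sym: "\<And>x y. E x y \<Longrightarrow> E y x" using g unfolding graph_def by blast
  obtain X Y where SV: "S \<subseteq> V" and XY: "S = X \<union> Y" "X \<inter> Y = {}"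
     "\<forall>x\<in>X. \<forall>y\<in>Y. E x y" "\<forall>x\<in>X. \<forall>x'\<in>X. \<not> E x x'" "\<forall>y\<in>Y. \<forall>y'\<in>Y. \<not> E y y'"
    using S unfolding induces_complete_bipartite_def by blast
  have vi: "v i \<in> S" using sub by blast
  show ?thesis
  proof (cases "v i \<in> X")
    case True
    have "X = {v i}" using side[OF g n5 c gn i SV sub XY(1,3,4) True] .
    then show ?thesis using XY vi by auto
  next
    case False
    then have Yv: "v i \<in> Y" using vi XY by blast
    have YX: "S = Y \<union> X" "\<forall>x\<in>Y. \<forall>y\<in>X. E x y" using XY sym by blast+
    have "Y = {v i}" using side[OF g n5 c gn i SV sub YX XY(5) Yv] .
    then show ?thesis using XY vi sym by blast
  qed
qed

theorem mainTheorem9: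
  fixes V :: "'a set" and E :: "'a \<Rightarrow> 'a \<Rightarrow> bool"
    and n :: nat and v :: "nat \<Rightarrow> 'a" and B :: "nat \<Rightarrow> 'a set"
  assumes "graph V E"
    and "n \<ge> 5"
    and "induced_cycle V E n v"
    and "good_neighbours V E n v"
    and "\<forall>i<n. biclique V E (B i)"
    and "\<forall>i<n. {v ((i + n - 1) mod n), v i, v ((i + 1) mod n)} \<subseteq> B i"
  shows "(\<forall>i<n. B i \<subseteq> closed_nbhd E (v i))
    \<and> induced_cycle (KBe_vertices V E) (KBe_adj V E) n B
    \<and> good_neighbours (KBe_vertices V E) (KBe_adj V E) n B"
proof -
  note g = assms(1) and n5 = assms(2) and c = assms(3) and gn = assms(4)
  have n0: "0 < n" using n5 by simp
  have sym: "\<And>x y. E x y \<Longrightarrow> E y x" and irr: "\<And>x. \<not> E x x" using g unfolding graph_def by blast+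
  have cyc: "\<And>a b. a<n \<Longrightarrow> b<n \<Longrightarrow> E (v a) (v b) \<longleftrightarrow> (b = (a + 1) mod n \<or> a = (b + 1) mod n)"
    using c unfolding induced_cycle_def by blast
  have vinj: "\<And>a b. a<n \<Longrightarrow> b<n \<Longrightarrow> v a = v b \<Longrightarrow> a = b"
    using c unfolding induced_cycle_def inj_on_def by blast
  have bic: "\<And>i. i<n \<Longrightarrow> biclique V E (B i)" using assms(5) by blast
  have st: "\<And>i. i<n \<Longrightarrow> v i \<in> B i \<and> (\<forall>y\<in>B i. y \<noteq> v i \<longrightarrow> E (v i) y) \<and> (\<forall>y\<in>B i. \<forall>y'\<in>B i. y \<noteq> v i \<longrightarrow> y' \<noteq> v i \<longrightarrow> \<not> E y y')"
    using star[OF g n5 c gn] assms(5,6) unfolding biclique_def by blast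
  have subB: "\<And>i. i<n \<Longrightarrow> {v ((i + n - 1) mod n), v i, v ((i + 1) mod n)} \<subseteq> B i" using assms(6) by blast
  have P1: "\<forall>i<n. B i \<subseteq> closed_nbhd E (v i)"
    using st unfolding closed_nbhd_def by blast
  have nb: "\<And>j a. j<n \<Longrightarrow> a<n \<Longrightarrow> v a \<in> B j \<Longrightarrow> a = j \<or> a = (j+1) mod n \<or> j = (a+1) mod n"
  proof -
    fix j a assume j: "j<n" and a: "a<n" and va: "v a \<in> B j"
    show "a = j \<or> a = (j+1) mod n \<or> j = (a+1) mod n"
    proof (cases "v a = v j")
      case True then show ?thesis using vinj[OF a j] by simp
    next
      case False
      then have "E (v j) (v a)" using st[OF j] va by blast
      then show ?thesis using cyc[OF j a] by blast
    qed
  qed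
  have inj: "\<And>i j. i<n \<Longrightarrow> j<n \<Longrightarrow> B i = B j \<Longrightarrow> i = j"
  proof -
    fix i j assume i: "i<n" and j: "j<n" and eq: "B i = B j"
    have pl: "(i+n-1) mod n < n" and sl: "(i+1) mod n < n" using n0 by auto
    have "(i+n-1) mod n = j \<or> (i+n-1) mod n = (j+1) mod n \<or> j = ((i+n-1) mod n + 1) mod n"
      using nb[OF j pl] subB[OF i] eq by auto
    moreover have "(i+1) mod n = j \<or> (i+1) mod n = (j+1) mod n \<or> j = ((i+1) mod n + 1) mod n"
      using nb[OF j sl] subB[OF i] eq by auto
    ultimately show "i = j" using near[OF i j n5] by simp
  qed
  have adj: "\<And>i j. i<n \<Longrightarrow> j<n \<Longrightarrow> KBe_adj V E (B i) (B j) \<longleftrightarrow> (j = (i + 1) mod n \<or> i = (j + 1) mod n)"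
  proof -
    fix i j assume i: "i<n" and j: "j<n"
    show "KBe_adj V E (B i) (B j) \<longleftrightarrow> (j = (i + 1) mod n \<or> i = (j + 1) mod n)"
    proof
      assume "KBe_adj V E (B i) (B j)"
      then obtain x y where ne: "B i \<noteq> B j" and xy: "E x y" "x \<in> B i" "y \<in> B i" "x \<in> B j" "y \<in> B j"
        unfolding KBe_adj_def by blast
      have "i \<noteq> j" using ne by auto
      then have ij: "v i \<noteq> v j" using vinj[OF i j] by blast
      have "x = v i \<or> y = v i" using st[OF i] xy by blast
      moreover have "x = v j \<or> y = v j" using st[OF j] xy by blast
      ultimately have "E (v i) (v j)" using xy(1) ij irr sym by blast
      then show "j = (i + 1) mod n \<or> i = (j + 1) mod n" using cyc[OF i j] by blast
    next
      assume h: "j = (i + 1) mod n \<or> i = (j + 1) mod n"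
      have ne: "B i \<noteq> B j" using inj[OF i j] h A5[OF i n5] A5[OF j n5] by auto
      have E: "E (v i) (v j)" using cyc[OF i j] h by blast
      have "v j \<in> B i" using h subB[OF i] subB[OF j] A3[OF j n5] A3[OF i n5] by auto
      moreover have "v i \<in> B j" using h subB[OF i] subB[OF j] A3[OF j n5] A3[OF i n5] by auto
      ultimately show "KBe_adj V E (B i) (B j)" unfolding KBe_adj_def
        using bic[OF i] bic[OF j] ne E st[OF i] st[OF j] by blast
    qed
  qed
  have P2: "induced_cycle (KBe_vertices V E) (KBe_adj V E) n B"
  proof -
    have "inj_on B {..<n}" unfolding inj_on_def using inj by blast
    moreover have "\<forall>i<n. B i \<in> KBe_vertices V E" unfolding KBe_vertices_def using bic by blast
    ultimately show ?thesis unfolding induced_cycle_def using n5 adj by simp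
  qed
  have P3: "good_neighbours (KBe_vertices V E) (KBe_adj V E) n B"
    unfolding good_neighbours_def
  proof (intro ballI allI impI)
    fix T i assume T: "T \<in> KBe_vertices V E - B ` {..<n}" and i: "i<n"
      and h: "KBe_adj V E T (B ((i + n - 1) mod n)) \<and> KBe_adj V E T (B ((i + 1) mod n))"
    define k where "k = (i + n - 1) mod n"
    define s where "s = (i + 1) mod n"
    have k: "k < n" and s: "s<n" using n0 by (auto simp: k_def s_def)
    have ski: "(k+1) mod n = i" using A2[OF i n5] k_def by simp
    have bT: "biclique V E T" using T unfolding KBe_vertices_def by blast
    obtain X Y where XY: "T = X \<union> Y" "X \<inter> Y = {}"
     "\<forall>x\<in>X. \<forall>y\<in>Y. E x y" "\<forall>x\<in>X. \<forall>x'\<in>X. \<not> E x x'" "\<forall>y\<in>Y. \<forall>y'\<in>Y. \<not> E y y'"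
    proof -
      have "induces_complete_bipartite V E T" using bT unfolding biclique_def by blast
      then show ?thesis using that unfolding induces_complete_bipartite_def by blast
    qed
    have bip: "\<And>a b c. a \<in> T \<Longrightarrow> b \<in> T \<Longrightarrow> c \<in> T \<Longrightarrow> E a b \<Longrightarrow> \<not> E a c \<Longrightarrow> E b c"
    proof -
      fix a b c assume abc: "a \<in> T" "b \<in> T" "c \<in> T" "E a b" "\<not> E a c"
      show "E b c" by (rule bipl[OF XY sym abc])
    qed
    obtain x y where xy: "E x y" "x \<in> T" "y \<in> T" "x \<in> B k" "y \<in> B k"
      using h unfolding KBe_adj_def k_def by blast
    obtain x' y' where xy': "E x' y'" "x' \<in> T" "y' \<in> T" "x' \<in> B s" "y' \<in> B s"
      using h unfolding KBe_adj_def s_def by blast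
    have "x = v k \<or> y = v k" using st[OF k] xy by blast
    then obtain a where a: "a \<in> T" "a \<in> B k" "E (v k) a" "v k \<in> T"
    proof
      assume "x = v k" then show ?thesis using that xy by blast
    next
      assume "y = v k" then show ?thesis using that xy sym[OF xy(1)] by blast
    qed
    have "x' = v s \<or> y' = v s" using st[OF s] xy' by blast
    then have vsT: "v s \<in> T" using xy' by blast
    have nks: "\<not> E (v k) (v s)" using cyc[OF k s] A4[OF i n5] unfolding k_def s_def by simp
    have as: "E a (v s)" using bip[OF a(4) a(1) vsT a(3) nks] .
    have ak: "E a (v k)" using sym a(3) by blast
    have aV: "a \<in> V" using g as unfolding graph_def by blast
    have ai: "a = v i"
    proof (cases "a \<in> v ` {..<n}")
      case False
      moreover have "E a (v ((i + n - 1) mod n))" "E a (v ((i + 1) mod n))" using ak as k_def s_def by simp_all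
      ultimately have "E a (v i)" using gn aV i unfolding good_neighbours_def by blast
      moreover have "v i \<in> B k" using subB[OF k] ski by auto
      moreover have "a \<noteq> v k" using ak irr by blast
      moreover have "v i \<noteq> v k" using vinj[OF i k] A5[OF i n5] k_def by auto
      ultimately show ?thesis using st[OF k] a(2) by blast
    next
      case True
      then obtain j where j: "j<n" "a = v j" by auto
      have "k = j \<or> k = (j+1) mod n \<or> j = (k + 1) mod n"
        using cyc[OF j(1) k] ak j by auto
      moreover have "s = j \<or> s = (j+1) mod n \<or> j = (s + 1) mod n"
        using cyc[OF j(1) s] as j by auto
      ultimately have "j = i" using near[OF i j(1) n5, folded k_def s_def] by blast
      then show ?thesis using j by simp
    qed
    have nTB: "T \<noteq> B i" using T i by blast
    have "v k \<in> B i" using subB[OF i] k_def by auto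
    moreover have "v i \<in> B i" using st[OF i] by blast
    ultimately show "KBe_adj V E T (B i)" unfolding KBe_adj_def
      using bT bic[OF i] nTB a ai by blast
  qed
  show ?thesis using P1 P2 P3 by blast
qed

end
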